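(* Let $(L^n_{\mathbb{R}})^{+}$ be the set of all real symmetric matrices $A\in M_n(\mathbb{R})$ with nonnegative spectrum such that the Schur map $S_A\colon M_n(\mathbb{R})\to M_n(\mathbb{R})$, $S_A(B)=A\circ B$, is nonzero and multiplicative. Then $(L^n_{\mathbb{R}})^{+}$ (a group under the Schur product) has cardinality $2^{n-1}$.
   Context: $A\circ B=(a_{ij}b_{ij})$ is the entrywise product; multiplicative means $S_A(BC)=S_A(B)S_A(C)$ for all $B,C\in M_n(\mathbb{R})$. *)

theory Defs
  imports "HOL-Analysis.Analysis"
begin

definition schur_prod :: "real^'n^'n \<Rightarrow> real^'n^'n \<Rightarrow> real^'n^'n" where
  "schur_prod A B = (\<chi> i j. A $ i $ j * B $ i $ j)"

definition symmetric_mat :: "real^'n^'n \<Rightarrow> bool" where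
  "symmetric_mat A \<longleftrightarrow> transpose A = A"

text \<open>Eigenvalue of a real matrix (real eigenvalues; for symmetric matrices the
  whole spectrum is real).\<close>
definition is_eigenvalue :: "real^'n^'n \<Rightarrow> real \<Rightarrow> bool" where
  "is_eigenvalue A c \<longleftrightarrow> (\<exists>x. x \<noteq> 0 \<and> A *v x = c *\<^sub>R x)"

definition nonneg_spectrum :: "real^'n^'n \<Rightarrow> bool" where
  "nonneg_spectrum A \<longleftrightarrow> (\<forall>c. is_eigenvalue A c \<longrightarrow> c \<ge> 0)"

definition schur_multiplicative :: "real^'n^'n \<Rightarrow> bool" where
  "schur_multiplicative A \<longleftrightarrow>
     (\<forall>B C. schur_prod A (B ** C) = schur_prod A B ** schur_prod A C)"

definition L_plus :: "(real^'n^'n) set" where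
  "L_plus = {A. symmetric_mat A \<and> nonneg_spectrum A \<and>
                (\<lambda>B. schur_prod A B) \<noteq> (\<lambda>B. 0) \<and> schur_multiplicative A}"

end

theory Submission
  imports Defs
begin

lemma mult_char:
  fixes A :: "real^'n^'n"
  shows "schur_multiplicative A \<longleftrightarrow> (\<forall>i j k. A$i$j = A$i$k * A$k$j)"
proof
  assume m: "schur_multiplicative A"
  show "\<forall>i j k. A$i$j = A$i$k * A$k$j"
  proof (intro allI)
    fix i j k :: 'n
    define B :: "real^'n^'n" where "B = (\<chi> a b. if a = i \<and> b = k then 1 else 0)"
    define C :: "real^'n^'n" where "C = (\<chi> a b. if a = k \<and> b = j then 1 else 0)"
    have "schur_prod A (B ** C) $ i $ j = (schur_prod A B ** schur_prod A C) $ i $ j"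
      using m unfolding schur_multiplicative_def by simp
    moreover have "schur_prod A (B ** C) $ i $ j = A$i$j"
      unfolding schur_prod_def matrix_matrix_mult_def B_def C_def
      by (simp add: if_distrib cong: if_cong)
    moreover have "(schur_prod A B ** schur_prod A C) $ i $ j = A$i$k * A$k$j"
      unfolding schur_prod_def matrix_matrix_mult_def B_def C_def
      by (simp add: if_distrib cong: if_cong)
    ultimately show "A$i$j = A$i$k * A$k$j" by simp
  qed
next
  assume h: "\<forall>i j k. A$i$j = A$i$k * A$k$j"
  show "schur_multiplicative A"
    unfolding schur_multiplicative_def schur_prod_def matrix_matrix_mult_def
  proof (intro allI)
    fix B C :: "real^'n^'n"
    show "(\<chi> i j. A $ i $ j * (\<chi> i j. \<Sum>k\<in>UNIV. B $ i $ k * C $ k $ j) $ i $ j) =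
       (\<chi> i j. \<Sum>k\<in>UNIV. (\<chi> i j. A $ i $ j * B $ i $ j) $ i $ k * (\<chi> i j. A $ i $ j * C $ i $ j) $ k $ j)"
    proof (simp add: vec_eq_iff sum_distrib_left, intro allI sum.cong refl)
      fix i j k
      have "A$i$j = A$i$k * A$k$j" using h by blast
      then show "A $ i $ j * (B $ i $ k * C $ k $ j) = A $ i $ k * B $ i $ k * (A $ k $ j * C $ k $ j)"
        by (simp add: algebra_simps)
    qed
  qed
qed

definition sg :: "'n set \<Rightarrow> 'n \<Rightarrow> real" where
  "sg S i = (if i \<in> S then -1 else 1)"

definition MS :: "'n set \<Rightarrow> real^'n^'n" where
  "MS S = (\<chi> i j. sg S i * sg S j)"

lemma sg_sq: "sg S i * sg S i = 1"
  by (simp add: sg_def)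

lemma MS_in: "(MS S :: real^'n^'n) \<in> L_plus"
proof -
  let ?A = "MS S :: real^'n^'n"
  let ?s = "(\<chi> i. sg S i) :: real^'n"
  have sym: "symmetric_mat ?A"
    by (simp add: symmetric_mat_def transpose_def MS_def vec_eq_iff mult.commute)
  have Av: "?A *v x = (?s \<bullet> x) *\<^sub>R ?s" for x
    by (simp add: vec_eq_iff matrix_vector_mult_def MS_def inner_vec_def sum_distrib_left
        algebra_simps)
  have ss: "?s \<bullet> ?s = real CARD('n)"
    by (simp add: inner_vec_def sg_sq)
  have ns: "nonneg_spectrum ?A"
    unfolding nonneg_spectrum_def is_eigenvalue_def
  proof (intro allI impI)
    fix c assume "\<exists>x. x \<noteq> 0 \<and> ?A *v x = c *\<^sub>R x"
    then obtain x where x0: "x \<noteq> 0" and e: "?A *v x = c *\<^sub>R x" by blast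
    have e2: "(?s \<bullet> x) *\<^sub>R ?s = c *\<^sub>R x" using e Av by simp
    show "c \<ge> 0"
    proof (cases "?s \<bullet> x = 0")
      case True
      then have "c *\<^sub>R x = 0" using e2 by simp
      then have "c = 0" using x0 by simp
      then show ?thesis by simp
    next
      case False
      have "?s \<bullet> ((?s \<bullet> x) *\<^sub>R ?s) = ?s \<bullet> (c *\<^sub>R x)" using e2 by simp
      then have "(?s \<bullet> x) * real CARD('n) = c * (?s \<bullet> x)" using ss by simp
      then have "c = real CARD('n)" using False by simp
      then show ?thesis by simp
    qed
  qed
  have nz: "(\<lambda>B. schur_prod ?A B) \<noteq> (\<lambda>B. 0)"
  proof
    assume "(\<lambda>B. schur_prod ?A B) = (\<lambda>B. 0)"
    then have "schur_prod ?A (mat 1) $ i $ i = 0" for i by simp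
    then show False by (simp add: schur_prod_def mat_def MS_def sg_sq)
  qed
  have mu: "schur_multiplicative ?A"
    unfolding mult_char
  proof (intro allI)
    fix i j k
    have "sg S i * sg S j = sg S i * (sg S k * sg S k) * sg S j" by (simp add: sg_sq)
    then show "?A$i$j = ?A$i$k * ?A$k$j" by (simp add: MS_def algebra_simps)
  qed
  show ?thesis using sym ns nz mu by (simp add: L_plus_def)
qed

lemma L_sub:
  fixes A :: "real^'n^'n"
  assumes "A \<in> L_plus"
  shows "A \<in> MS ` Pow (UNIV - {i0})"
proof -
  have sym: "\<And>i j. A$i$j = A$j$i" using assms
    by (simp add: L_plus_def symmetric_mat_def vec_eq_iff transpose_def)
  have h: "\<And>i j k. A$i$j = A$i$k * A$k$j" using assms by (simp add: L_plus_def mult_char)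
  obtain p q where pq: "A$p$q \<noteq> 0"
  proof -
    have "(\<lambda>B. schur_prod A B) \<noteq> (\<lambda>B. 0)" using assms by (simp add: L_plus_def)
    then obtain B where "schur_prod A B \<noteq> 0" by auto
    then obtain p q where "A$p$q * B$p$q \<noteq> 0" by (auto simp: schur_prod_def vec_eq_iff)
    then show ?thesis using that by auto
  qed
  have "A$p$q = A$p$p * A$p$q" using h by blast
  then have pp: "A$p$p = 1" using pq by simp
  have nzk: "A$p$k \<noteq> 0" for k
  proof
    assume "A$p$k = 0"
    then show False using h[of p p k] pp by simp
  qed
  have diag: "A$k$k = 1" for k
  proof -
    have "A$p$k = A$p$k * A$k$k" using h by blast
    then show ?thesis using nzk[of k] by simp
  qed
  have pm: "A$i$j = 1 \<or> A$i$j = -1" for i j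
  proof -
    have "A$i$j * A$i$j = 1" using h[of i i j] diag[of i] sym[of j i] by simp
    then have "(A$i$j - 1) * (A$i$j + 1) = 0" by (simp add: algebra_simps)
    then show ?thesis by (simp add: mult_eq_0_iff eq_neg_iff_add_eq_0)
  qed
  define S where "S = {i. A$i$i0 = -1}"
  have Sin: "S \<in> Pow (UNIV - {i0})" using diag[of i0] by (auto simp: S_def)
  have sgv: "sg S i = A$i$i0" for i
    using pm[of i i0] by (auto simp: sg_def S_def)
  have "A = MS S"
    unfolding MS_def vec_eq_iff
    by (simp add: sgv) (metis h sym)
  then show ?thesis using Sin by blast
qed

lemma MS_inj: "inj_on (MS :: 'n set \<Rightarrow> real^'n^'n) (Pow (UNIV - {i0}))"
proof
  fix S T :: "'n set"
  assume S: "S \<in> Pow (UNIV - {i0})" and T: "T \<in> Pow (UNIV - {i0})" and e: "MS S = MS T"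
  have "sg S i = sg T i" for i
  proof -
    have "(MS S :: real^'n^'n) $ i $ i0 = MS T $ i $ i0" using e by simp
    then show ?thesis using S T by (auto simp: MS_def sg_def split: if_splits)
  qed
  then show "S = T" by (auto simp: sg_def fun_eq_iff split: if_splits) (metis one_neq_neg_one)+
qed

theorem theorem3p4:
  shows "card (L_plus :: (real^'n^'n) set) = 2 ^ (CARD('n) - 1)"
proof -
  obtain i0 :: 'n where True by simp
  have "(L_plus :: (real^'n^'n) set) = MS ` Pow (UNIV - {i0})"
    using L_sub MS_in by blast
  then have "card (L_plus :: (real^'n^'n) set) = card (Pow (UNIV - {i0} :: 'n set))"
    using MS_inj card_image by metis
  also have "\<dots> = 2 ^ (CARD('n) - 1)"
    by (simp add: card_Pow)
  finally show ?thesis .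
qed

end
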